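(* In the exploration process and with the random variables $M(t,i)$ described in the context, the sequence of random variables $$M(0,n-a),\,M(1,1),\dots,M(1,n-a),\,M(2,1),\dots,M(n,n-a)$$ (indexed in lexicographic order of $(t,i)$) forms a martingale with respect to the filtration it generates.
   Context: Let $r\ge2$, $0<p<1$, and consider the random graph $G(n,p)$ on $[n]$ (each edge independently present with probability $p$). Let the initially infected set be $\mathcal{A}(0)=\{1,\dots,a\}$. Exploration process: set $\mathcal{Z}(0)=\emptyset$. For each step $t=1,\dots,n$: if $\mathcal{A}(t-1)\setminus\mathcal{Z}(t-1)\neq\emptyset$, pick a vertex $u_t$ in it by an arbitrary rule and set $\mathcal{Z}(t)=\mathcal{Z}(t-1)\cup\{u_t\}$; otherwise $\mathcal{Z}(t)=\mathcal{Z}(t-1)$. For $t\ge0$ and $i\in[n-a]$ let $X(t,i)$ be the indicator that vertex $a+i$ has at least $r$ neighbours in $\mathcal{Z}(t)$, and set $\mathcal{A}(t)=\mathcal{A}(0)\cup\{a+i: X(t,i)=1,\ i\in[n-a]\}$. Let $T$ be the smallest $t$ with $\mathcal{A}(t)=\mathcal{Z}(t)$ (equivalently $|\mathcal{A}(t)|=t$); $\mathcal{A}(T)$ is the final infected set of bootstrap percolation with threshold $r$. Let $\hat\pi(t)=\mathbb{P}[\mathrm{Bin}(t,p)\ge r]$ and define the random quantity $\pi(t)=\hat\pi(t)$ for $t\le T$ and $\pi(t)=\hat\pi(T)$ for $t>T$. Each step $t\ge1$ is divided into rounds $(t,1),\dots,(t,n-a)$, ordered lexicographically, preceded by $(0,n-a)$.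 For $(t,i)\ge(0,n-a)$ define $$M(t,i):=\sum_{j=1}^{i}\frac{X(t,j)-\pi(t)}{1-\pi(t)}+\sum_{j=i+1}^{n-a}\frac{X(t-1,j)-\pi(t-1)}{1-\pi(t-1)}.$$ *)

theory Defs
  imports "HOL-Probability.Probability"
begin

definition nat_filtration :: "'a measure \<Rightarrow> (nat \<Rightarrow> 'a \<Rightarrow> real) \<Rightarrow> nat \<Rightarrow> 'a measure" where
  "nat_filtration M Y k =
     sigma (space M) (\<Union>j\<in>{..k}. {Y j -` B \<inter> space M | B. B \<in> sets borel})"

definition martingale_upto :: "'a measure \<Rightarrow> (nat \<Rightarrow> 'a \<Rightarrow> real) \<Rightarrow> nat \<Rightarrow> bool" where
  "martingale_upto M Y N \<longleftrightarrow>
     (\<forall>k\<le>N. integrable M (Y k)) \<and>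
     (\<forall>k<N. AE \<omega> in M. real_cond_exp M (nat_filtration M Y k) (Y (Suc k)) \<omega> = Y k \<omega>)"

text \<open>A graph on [n] = {1..n} is encoded by its indicator on pairs (u,v) with u<v.\<close>
definition Gnp :: "nat \<Rightarrow> real \<Rightarrow> (nat \<times> nat \<Rightarrow> bool) pmf" where
  "Gnp n p = Pi_pmf {(u, v). 1 \<le> u \<and> u < v \<and> v \<le> n} False (\<lambda>_. bernoulli_pmf p)"

definition adj :: "(nat \<times> nat \<Rightarrow> bool) \<Rightarrow> nat \<Rightarrow> nat \<Rightarrow> bool" where
  "adj G u v \<longleftrightarrow> u \<noteq> v \<and> G (min u v, max u v)"

definition hasr :: "nat \<Rightarrow> (nat \<times> nat \<Rightarrow> bool) \<Rightarrow> nat set \<Rightarrow> nat \<Rightarrow> bool" where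
  "hasr r G Z v \<longleftrightarrow> card {w \<in> Z. adj G w v} \<ge> r"

definition Aset :: "nat \<Rightarrow> nat \<Rightarrow> nat \<Rightarrow> (nat \<times> nat \<Rightarrow> bool) \<Rightarrow> nat set \<Rightarrow> nat set" where
  "Aset n a r G Z = {1..a} \<union> {v. a + 1 \<le> v \<and> v \<le> n \<and> hasr r G Z v}"

text \<open>Z(t). The selection rule may depend on the step t and on the current sets Z(t-1), A(t-1);
  it must pick a vertex of A(t-1) - Z(t-1) whenever that set is nonempty.\<close>
fun Zset :: "nat \<Rightarrow> nat \<Rightarrow> nat \<Rightarrow> (nat \<Rightarrow> nat set \<Rightarrow> nat set \<Rightarrow> nat) \<Rightarrow>
    (nat \<times> nat \<Rightarrow> bool) \<Rightarrow> nat \<Rightarrow> nat set" where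
  "Zset n a r rule G 0 = {}"
| "Zset n a r rule G (Suc t) =
     (let Z = Zset n a r rule G t; A = Aset n a r G Z in
      if A - Z \<noteq> {} then insert (rule (Suc t) Z A) Z else Z)"

definition Ahat :: "nat \<Rightarrow> nat \<Rightarrow> nat \<Rightarrow> (nat \<Rightarrow> nat set \<Rightarrow> nat set \<Rightarrow> nat) \<Rightarrow>
    (nat \<times> nat \<Rightarrow> bool) \<Rightarrow> nat \<Rightarrow> nat set" where
  "Ahat n a r rule G t = Aset n a r G (Zset n a r rule G t)"

definition Xv :: "nat \<Rightarrow> nat \<Rightarrow> nat \<Rightarrow> (nat \<Rightarrow> nat set \<Rightarrow> nat set \<Rightarrow> nat) \<Rightarrow>
    (nat \<times> nat \<Rightarrow> bool) \<Rightarrow> nat \<Rightarrow> nat \<Rightarrow> real" where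
  "Xv n a r rule G t i = (if hasr r G (Zset n a r rule G t) (a + i) then 1 else 0)"

definition Tstop :: "nat \<Rightarrow> nat \<Rightarrow> nat \<Rightarrow> (nat \<Rightarrow> nat set \<Rightarrow> nat set \<Rightarrow> nat) \<Rightarrow>
    (nat \<times> nat \<Rightarrow> bool) \<Rightarrow> nat" where
  "Tstop n a r rule G = (LEAST t. Ahat n a r rule G t = Zset n a r rule G t)"

definition pihat :: "nat \<Rightarrow> real \<Rightarrow> nat \<Rightarrow> real" where
  "pihat r p t = measure_pmf.prob (binomial_pmf t p) {r..}"

definition piv :: "nat \<Rightarrow> nat \<Rightarrow> nat \<Rightarrow> real \<Rightarrow> (nat \<Rightarrow> nat set \<Rightarrow> nat set \<Rightarrow> nat) \<Rightarrow>
    (nat \<times> nat \<Rightarrow> bool) \<Rightarrow> nat \<Rightarrow> real" where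
  "piv n a r p rule G t = (if t \<le> Tstop n a r rule G then pihat r p t else pihat r p (Tstop n a r rule G))"

text \<open>M(t,i); for t = 0 (only used with i = n-a) the second sum is empty.\<close>
definition Mv :: "nat \<Rightarrow> nat \<Rightarrow> nat \<Rightarrow> real \<Rightarrow> (nat \<Rightarrow> nat set \<Rightarrow> nat set \<Rightarrow> nat) \<Rightarrow>
    (nat \<times> nat \<Rightarrow> bool) \<Rightarrow> nat \<Rightarrow> nat \<Rightarrow> real" where
  "Mv n a r p rule G t i =
     (\<Sum>j=1..i. (Xv n a r rule G t j - piv n a r p rule G t) / (1 - piv n a r p rule G t)) +
     (\<Sum>j=i+1..n-a. (Xv n a r rule G (t - 1) j - piv n a r p rule G (t - 1)) /
                      (1 - piv n a r p rule G (t - 1)))"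

text \<open>The sequence M(0,n-a), M(1,1), ..., M(1,n-a), M(2,1), ..., M(n,n-a), indexed by
  k = 0, ..., n(n-a): k = 0 is (0,n-a), and k = (t-1)(n-a) + i with 1 <= i <= n-a is (t,i).\<close>
definition Mseq :: "nat \<Rightarrow> nat \<Rightarrow> nat \<Rightarrow> real \<Rightarrow> (nat \<Rightarrow> nat set \<Rightarrow> nat set \<Rightarrow> nat) \<Rightarrow>
    nat \<Rightarrow> (nat \<times> nat \<Rightarrow> bool) \<Rightarrow> real" where
  "Mseq n a r p rule k G =
     (if k = 0 then Mv n a r p rule G 0 (n - a)
      else Mv n a r p rule G ((k - 1) div (n - a) + 1) ((k - 1) mod (n - a) + 1))"

end

theory Submission
  imports Defs
begin

lemma alg1: "(1::real) - pt \<noteq> 0 \<Longrightarrow> 1 - pp \<noteq> 0 \<Longrightarrow> - pt / (1 - pt) + pp / (1 - pp) + (- 1 - pp / (1 - pp)) * pp + 1 / (1 - pt) * pt = 0"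
proof -
  assume ne: "(1::real) - pt \<noteq> 0" "1 - pp \<noteq> 0"
  have a: "1/(1-pt)*pt = pt/(1-pt)" by simp
  have "pp/(1-pp) - pp*pp/(1-pp) = pp*(1-pp)/(1-pp)" by (simp add: diff_divide_distrib[symmetric] algebra_simps)
  also have "\<dots> = pp" using ne by simp
  finally have b: "pp/(1-pp) - pp*pp/(1-pp) = pp" .
  have c: "(-1 - pp/(1-pp))*pp = -pp - pp*pp/(1-pp)" by (simp add: algebra_simps)
  show ?thesis using a b c by linarith
qed
lemma alg2: "(1::real) - pt \<noteq> 0 \<Longrightarrow> 1 - pp \<noteq> 0 \<Longrightarrow>
  ((x::real) - pt) / (1 - pt) + pp / (1 - pp) = - pt / (1 - pt) + pp / (1 - pp) + (- 1 - pp / (1 - pp)) * 0 + 1 / (1 - pt) * x"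
  by (simp add: diff_divide_distrib algebra_simps)
lemma alg3: "(1::real) - pt \<noteq> 0 \<Longrightarrow> 1 - pp \<noteq> 0 \<Longrightarrow>
  0 = - pt / (1 - pt) + pp / (1 - pp) + (- 1 - pp / (1 - pp)) * 1 + 1 / (1 - pt) * 1"
proof -
  assume "(1::real) - pt \<noteq> 0"
  then have "1/(1-pt) - pt/(1-pt) = 1" by (simp add: diff_divide_distrib[symmetric])
  then show ?thesis by simp
qed


lemma cond_exp_step:
  fixes P :: "'a pmf" and Y :: "nat \<Rightarrow> 'a \<Rightarrow> real"
  assumes fin: "finite (set_pmf P)"
    and key: "\<And>A. (\<And>x y. x \<in> A \<Longrightarrow> (\<forall>j\<le>k. Y j x = Y j y) \<Longrightarrow> y \<in> A) \<Longrightarrow>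
        measure_pmf.expectation P (\<lambda>x. indicator A x * (Y (Suc k) x - Y k x)) = 0"
  shows "AE x in measure_pmf P. real_cond_exp (measure_pmf P) (nat_filtration (measure_pmf P) Y k) (Y (Suc k)) x = Y k x"
proof -
  let ?M = "measure_pmf P"
  let ?F = "nat_filtration ?M Y k"
  let ?G = "\<Union>j\<in>{..k}. {Y j -` B \<inter> space ?M | B. B \<in> sets borel}"
  have Gsub: "?G \<subseteq> Pow (space ?M)" by auto
  have sF: "sets ?F = sigma_sets (space ?M) ?G"
    unfolding nat_filtration_def by (rule sets_measure_of[OF Gsub])
  have spF: "space ?F = space ?M"
    unfolding nat_filtration_def by (rule space_measure_of[OF Gsub])
  have sub: "subalgebra ?M ?F" unfolding subalgebra_def using spF by simp
  interpret S: finite_measure_subalgebra ?M ?F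
    by unfold_locales (simp_all add: sub)
  have sat: "\<forall>x y. x \<in> A \<longrightarrow> (\<forall>j\<le>k. Y j x = Y j y) \<longrightarrow> y \<in> A" if "A \<in> sets ?F" for A
  proof -
    have "A \<in> sigma_sets (space ?M) ?G" using that sF by simp
    then show ?thesis
    proof induction
      case (Basic a)
      then show ?case by auto
    next
      case Empty then show ?case by simp
    next
      case (Compl a)
      then show ?case by (metis Diff_iff UNIV_I space_measure_pmf)
    next
      case (Union a)
      then show ?case by (metis UN_iff)
    qed
  qed
  have int: "integrable ?M f" for f :: "'a \<Rightarrow> real" by (rule integrable_measure_pmf_finite[OF fin])
  show ?thesis
  proof (rule S.real_cond_exp_charact)
    fix A assume A: "A \<in> sets ?F"
    have z: "measure_pmf.expectation P (\<lambda>x. indicator A x * (Y (Suc k) x - Y k x)) = 0"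
      by (rule key) (use sat[OF A] in blast)
    have "measure_pmf.expectation P (\<lambda>x. indicator A x * Y (Suc k) x) -
          measure_pmf.expectation P (\<lambda>x. indicator A x * Y k x) =
          measure_pmf.expectation P (\<lambda>x. indicator A x * Y (Suc k) x - indicator A x * Y k x)"
      by (rule Bochner_Integration.integral_diff[OF int int, symmetric])
    also have "\<dots> = 0" using z by (simp add: right_diff_distrib)
    finally show "(\<integral>x\<in>A. Y (Suc k) x \<partial>?M) = (\<integral>x\<in>A. Y k x \<partial>?M)"
      unfolding set_lebesgue_integral_def by simp
  next
    show "integrable ?M (Y (Suc k))" by (rule int)
    show "integrable ?M (Y k)" by (rule int)
    show "Y k \<in> borel_measurable ?F"
    proof (rule measurableI)
      fix B :: "real set" assume "B \<in> sets borel"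
      then have "Y k -` B \<inter> space ?M \<in> ?G" by blast
      then show "Y k -` B \<inter> space ?F \<in> sets ?F" unfolding sF spF by (rule sigma_sets.Basic)
    qed simp
  qed
qed


lemma pmf_int_cong:
  fixes f g :: "'a \<Rightarrow> real"
  assumes "\<And>x. x \<in> set_pmf M \<Longrightarrow> f x = g x"
  shows "measure_pmf.expectation M f = measure_pmf.expectation M g"
  by (rule integral_cong_AE) (auto simp: AE_measure_pmf_iff assms)

lemma fin_Pi: "finite X \<Longrightarrow> finite (set_pmf (Pi_pmf X (d::bool) (\<lambda>_. q)))"
  by (rule finite_subset[OF set_Pi_pmf_subset']) (auto intro!: finite_PiE_dflt)

lemma pair_int_zero:
  fixes H :: "'a \<times> 'b \<Rightarrow> real"
  assumes fa: "finite (set_pmf A)" and fb: "finite (set_pmf B)"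
    and z: "\<And>x. x \<in> set_pmf A \<Longrightarrow> measure_pmf.expectation B (\<lambda>y. H (x, y)) = 0"
  shows "measure_pmf.expectation (pair_pmf A B) H = 0"
proof -
  have "measure_pmf.expectation (pair_pmf A B) H = (\<Sum>z\<in>set_pmf A \<times> set_pmf B. H z * pmf (pair_pmf A B) z)"
    by (rule integral_measure_pmf_real) (use fa fb in auto)
  also have "\<dots> = (\<Sum>x\<in>set_pmf A. \<Sum>y\<in>set_pmf B. H (x, y) * (pmf A x * pmf B y))"
    unfolding sum.cartesian_product by (intro sum.cong) (auto simp: pmf_pair)
  also have "\<dots> = (\<Sum>x\<in>set_pmf A. pmf A x * (\<Sum>y\<in>set_pmf B. H (x, y) * pmf B y))"
    by (simp add: sum_distrib_left mult_ac)
  also have "\<dots> = (\<Sum>x\<in>set_pmf A. pmf A x * measure_pmf.expectation B (\<lambda>y. H (x, y)))"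
  proof (rule sum.cong[OF refl])
    fix x
    have "measure_pmf.expectation B (\<lambda>y. H (x, y)) = (\<Sum>y\<in>set_pmf B. H (x, y) * pmf B y)"
      by (rule integral_measure_pmf_real) (use fb in auto)
    then show "pmf A x * (\<Sum>y\<in>set_pmf B. H (x, y) * pmf B y) = pmf A x * measure_pmf.expectation B (\<lambda>y. H (x, y))"
      by simp
  qed
  also have "\<dots> = 0" using z by simp
  finally show ?thesis .
qed

definition Eset :: "nat \<Rightarrow> (nat \<times> nat) set" where
  "Eset n = {(u, v). 1 \<le> u \<and> u < v \<and> v \<le> n}"

definition Evset :: "nat \<Rightarrow> nat \<Rightarrow> (nat \<times> nat) set" where
  "Evset n v = {e \<in> Eset n. fst e = v \<or> snd e = v}"

lemma finite_Eset: "finite (Eset n)"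
proof -
  have "Eset n \<subseteq> {0..n} \<times> {0..n}" unfolding Eset_def by auto
  then show ?thesis using finite_subset by blast
qed

lemma finite_Evset: "finite (Evset n v)"
  unfolding Evset_def using finite_Eset by simp

lemma Gnp_split:
  "Gnp n p = map_pmf (\<lambda>(f, g) x. if x \<in> Eset n - Evset n v then f x else g x)
     (pair_pmf (Pi_pmf (Eset n - Evset n v) False (\<lambda>_. bernoulli_pmf p))
               (Pi_pmf (Evset n v) False (\<lambda>_. bernoulli_pmf p)))"
proof -
  have "Eset n = (Eset n - Evset n v) \<union> Evset n v" unfolding Evset_def by auto
  then have "Gnp n p = Pi_pmf ((Eset n - Evset n v) \<union> Evset n v) False (\<lambda>_. bernoulli_pmf p)"
    unfolding Gnp_def Eset_def by simp
  also have "\<dots> = map_pmf (\<lambda>(f, g) x. if x \<in> Eset n - Evset n v then f x else g x)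
     (pair_pmf (Pi_pmf (Eset n - Evset n v) False (\<lambda>_. bernoulli_pmf p))
               (Pi_pmf (Evset n v) False (\<lambda>_. bernoulli_pmf p)))"
    by (rule Pi_pmf_union) (auto simp: finite_Eset finite_Evset)
  finally show ?thesis .
qed

lemma binom_dist:
  assumes S: "S \<subseteq> {1..n}" "v \<notin> S" "1 \<le> v" "v \<le> n" and p: "0 \<le> p" "p \<le> 1"
  shows "map_pmf (\<lambda>g. card {z \<in> S. g (min z v, max z v)}) (Pi_pmf (Evset n v) False (\<lambda>_. bernoulli_pmf p))
         = binomial_pmf (card S) p"
proof -
  define e where "e = (\<lambda>z. (min z v, max z v))"
  have inj: "inj_on e S"
  proof (rule inj_onI)
    fix x y assume "x \<in> S" "y \<in> S" "e x = e y"
    then show "x = y" using S(2) unfolding e_def by (auto simp: min_def max_def split: if_splits)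
  qed
  have sub: "e ` S \<subseteq> Evset n v"
  proof
    fix x assume "x \<in> e ` S"
    then obtain z where z: "z \<in> S" "x = e z" by blast
    then have "z \<noteq> v" "1 \<le> z" "z \<le> n" using S by auto
    then show "x \<in> Evset n v" using z S unfolding e_def Evset_def Eset_def
      by (cases "z < v") (auto simp: min_def max_def)
  qed
  have fin: "finite S" using S(1) finite_subset by blast
  have cS: "card (e ` S) = card S" using card_image[OF inj] .
  have "binomial_pmf (card S) p = map_pmf (\<lambda>f. card {x \<in> e ` S. f x}) (Pi_pmf (e ` S) False (\<lambda>_. bernoulli_pmf p))"
    by (rule binomial_pmf_altdef') (use fin cS p in auto)
  also have "Pi_pmf (e ` S) False (\<lambda>_. bernoulli_pmf p) =
      map_pmf (\<lambda>f x. if x \<in> e ` S then f x else False) (Pi_pmf (Evset n v) False (\<lambda>_. bernoulli_pmf p))"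
    by (rule Pi_pmf_subset[OF finite_Evset sub])
  also have "map_pmf (\<lambda>f. card {x \<in> e ` S. f x}) (map_pmf (\<lambda>f x. if x \<in> e ` S then f x else False)
       (Pi_pmf (Evset n v) False (\<lambda>_. bernoulli_pmf p))) =
      map_pmf (\<lambda>g. card {z \<in> S. g (e z)}) (Pi_pmf (Evset n v) False (\<lambda>_. bernoulli_pmf p))"
  proof -
    have "card {x \<in> e ` S. (if x \<in> e ` S then g x else False)} = card {z \<in> S. g (e z)}" for g
    proof -
      have "{x \<in> e ` S. (if x \<in> e ` S then g x else False)} = e ` {z \<in> S. g (e z)}" by auto
      moreover have "inj_on e {z \<in> S. g (e z)}" using inj by (rule inj_on_subset) auto
      ultimately show ?thesis by (simp add: card_image)
    qed
    then show ?thesis by (simp add: pmf.map_comp o_def)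
  qed
  finally show ?thesis unfolding e_def by simp
qed

lemma expect_ind:
  assumes S: "S \<subseteq> {1..n}" "v \<notin> S" "1 \<le> v" "v \<le> n" and p: "0 \<le> p" "p \<le> 1"
  shows "measure_pmf.expectation (Pi_pmf (Evset n v) False (\<lambda>_. bernoulli_pmf p))
           (\<lambda>g. if r \<le> card {z \<in> S. g (min z v, max z v)} then 1 else 0) = pihat r p (card S)"
proof -
  have "measure_pmf.expectation (Pi_pmf (Evset n v) False (\<lambda>_. bernoulli_pmf p))
           (\<lambda>g. if r \<le> card {z \<in> S. g (min z v, max z v)} then 1 else 0::real)
      = measure_pmf.expectation (map_pmf (\<lambda>g. card {z \<in> S. g (min z v, max z v)})
           (Pi_pmf (Evset n v) False (\<lambda>_. bernoulli_pmf p))) (indicator {r..})"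
    by (subst integral_map_pmf) (rule pmf_int_cong, simp add: indicator_def)
  also have "\<dots> = measure_pmf.expectation (binomial_pmf (card S) p) (indicator {r..})"
    by (simp only: binom_dist[OF assms])
  also have "\<dots> = pihat r p (card S)" unfolding pihat_def by simp
  finally show ?thesis .
qed

lemma pihat_lt1:
  assumes "1 \<le> r" "0 \<le> p" "p < 1"
  shows "pihat r p s < 1"
proof -
  let ?B = "binomial_pmf s p"
  have "measure_pmf.prob ?B {r..} \<le> measure_pmf.prob ?B (UNIV - {0})"
    using assms(1) by (intro measure_pmf.finite_measure_mono) auto
  also have "\<dots> = 1 - measure_pmf.prob ?B {0}"
    using measure_pmf.prob_compl[of "{0}" ?B] by simp
  also have "measure_pmf.prob ?B {0} = (1 - p) ^ s"
    using assms by (simp add: measure_pmf_single)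
  finally show ?thesis unfolding pihat_def using assms by (smt (verit) zero_less_power)
qed


definition stripv :: "nat \<Rightarrow> (nat \<times> nat \<Rightarrow> bool) \<Rightarrow> (nat \<times> nat \<Rightarrow> bool)" where
  "stripv v G = (\<lambda>e. if fst e = v \<or> snd e = v then False else G e)"

lemma hasr_mono:
  assumes "Z \<subseteq> Z'" "finite Z'" "hasr r G Z v"
  shows "hasr r G Z' v"
proof -
  have "card {w \<in> Z. adj G w v} \<le> card {w \<in> Z'. adj G w v}"
    using assms(1,2) by (intro card_mono) auto
  thus ?thesis using assms(3) unfolding hasr_def by linarith
qed

lemma Aset_mono:
  assumes "Z \<subseteq> Z'" "finite Z'"
  shows "Aset n a r G Z \<subseteq> Aset n a r G Z'"
  using hasr_mono[OF assms] unfolding Aset_def by blast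

lemma Aset_sub: "a \<le> n \<Longrightarrow> Aset n a r G Z \<subseteq> {1..n}"
  unfolding Aset_def by auto

lemma Zset_Suc_sub: "Zset n a r rule G s \<subseteq> Zset n a r rule G (Suc s)"
  by (auto simp: Let_def)

lemma Zset_mono: "s \<le> s' \<Longrightarrow> Zset n a r rule G s \<subseteq> Zset n a r rule G s'"
  using lift_Suc_mono_le[of "Zset n a r rule G", OF Zset_Suc_sub] by blast

context
  fixes n a r :: nat and rule :: "nat \<Rightarrow> nat set \<Rightarrow> nat set \<Rightarrow> nat"
  assumes rule_ok: "\<And>t Z A. A - Z \<noteq> {} \<Longrightarrow> rule t Z A \<in> A - Z"
    and a_le: "a \<le> n"
begin

lemma Zset_sub: "Zset n a r rule G s \<subseteq> {1..n}"
proof (induction s)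
  case 0 then show ?case by simp
next
  case (Suc s)
  let ?Z = "Zset n a r rule G s"
  let ?A = "Aset n a r G ?Z"
  show ?case
  proof (cases "?A - ?Z = {}")
    case True then show ?thesis using Suc by (simp add: Let_def)
  next
    case False
    then have "rule (Suc s) ?Z ?A \<in> ?A" using rule_ok by blast
    then have "rule (Suc s) ?Z ?A \<in> {1..n}" using Aset_sub[OF a_le] by blast
    then show ?thesis using Suc False by (auto simp: Let_def)
  qed
qed

lemma Zset_finite: "finite (Zset n a r rule G s)"
  using Zset_sub finite_subset by blast

lemma Z_sub_A: "Zset n a r rule G s \<subseteq> Aset n a r G (Zset n a r rule G s)"
proof (induction s)
  case 0 then show ?case by simp
next
  case (Suc s)
  let ?Z = "Zset n a r rule G s"
  let ?A = "Aset n a r G ?Z"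
  let ?Z' = "Zset n a r rule G (Suc s)"
  have m: "?A \<subseteq> Aset n a r G ?Z'"
    by (rule Aset_mono[OF Zset_Suc_sub Zset_finite])
  have "?Z' \<subseteq> insert (rule (Suc s) ?Z ?A) ?Z" by (auto simp: Let_def)
  moreover have "?A - ?Z \<noteq> {} \<Longrightarrow> rule (Suc s) ?Z ?A \<in> ?A" using rule_ok by blast
  moreover have "?A - ?Z = {} \<Longrightarrow> ?Z' = ?Z" by (simp add: Let_def)
  ultimately show ?case using Suc m by blast
qed

lemma Zset_stop:
  assumes "Aset n a r G (Zset n a r rule G s) = Zset n a r rule G s"
  shows "Zset n a r rule G (s + d) = Zset n a r rule G s"
proof (induction d)
  case 0 then show ?case by simp
next
  case (Suc d)
  then show ?case using assms by (simp add: Let_def)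
qed

lemma Zset_grow:
  assumes "Aset n a r G (Zset n a r rule G s) \<noteq> Zset n a r rule G s"
  shows "card (Zset n a r rule G (Suc s)) = Suc (card (Zset n a r rule G s))"
proof -
  let ?Z = "Zset n a r rule G s"
  let ?A = "Aset n a r G ?Z"
  have ne: "?A - ?Z \<noteq> {}" using assms Z_sub_A[of G s] by blast
  then have "rule (Suc s) ?Z ?A \<notin> ?Z" using rule_ok by blast
  moreover have "Zset n a r rule G (Suc s) = insert (rule (Suc s) ?Z ?A) ?Z"
    using ne by (simp add: Let_def)
  ultimately show ?thesis using Zset_finite[of G s] by simp
qed

lemma stop_exists: "\<exists>s. Ahat n a r rule G s = Zset n a r rule G s"
proof (rule ccontr)
  assume "\<not> ?thesis"
  then have h: "\<And>s. Aset n a r G (Zset n a r rule G s) \<noteq> Zset n a r rule G s"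
    unfolding Ahat_def by blast
  have "card (Zset n a r rule G s) = s" for s
    by (induction s) (simp_all add: Zset_grow[OF h] del: Zset.simps(2))
  moreover have "card (Zset n a r rule G (Suc n)) \<le> n"
    using card_mono[OF _ Zset_sub[of G "Suc n"]] by simp
  ultimately show False by (metis Suc_n_not_le_n)
qed

lemma Tstop_prop: "Ahat n a r rule G (Tstop n a r rule G) = Zset n a r rule G (Tstop n a r rule G)"
  unfolding Tstop_def using stop_exists by (rule LeastI_ex)

lemma Tstop_min: "s < Tstop n a r rule G \<Longrightarrow> Ahat n a r rule G s \<noteq> Zset n a r rule G s"
  unfolding Tstop_def using not_less_Least by blast

lemma card_Zset: "s \<le> Tstop n a r rule G \<Longrightarrow> card (Zset n a r rule G s) = s"
proof (induction s)
  case 0 then show ?case by simp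
next
  case (Suc s)
  then have "Aset n a r G (Zset n a r rule G s) \<noteq> Zset n a r rule G s"
    using Tstop_min[of s G] unfolding Ahat_def by simp
  then show ?case using Suc by (simp add: Zset_grow del: Zset.simps(2))
qed

lemma piv_min: "piv n a r p rule G s = pihat r p (min s (Tstop n a r rule G))"
  unfolding piv_def by (simp add: min_def)

lemma grow_case:
  assumes "Zset n a r rule G t \<noteq> Zset n a r rule G (t - 1)" "1 \<le> t"
  shows "t \<le> Tstop n a r rule G"
proof (rule ccontr)
  let ?T = "Tstop n a r rule G"
  assume "\<not> ?thesis"
  then have "?T \<le> t - 1" by simp
  then have e1: "t - 1 = ?T + (t - 1 - ?T)" and e2: "t = ?T + (t - ?T)" by auto
  have "Zset n a r rule G (t - 1) = Zset n a r rule G ?T"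
    by (subst e1) (rule Zset_stop[OF Tstop_prop[unfolded Ahat_def]])
  moreover have "Zset n a r rule G t = Zset n a r rule G ?T"
    by (subst e2) (rule Zset_stop[OF Tstop_prop[unfolded Ahat_def]])
  ultimately show False using assms(1) by simp
qed

lemma stay_case:
  assumes "Zset n a r rule G t = Zset n a r rule G (t - 1)" "1 \<le> t"
  shows "piv n a r p rule G t = piv n a r p rule G (t - 1)"
proof -
  let ?Z = "Zset n a r rule G (t - 1)"
  let ?A = "Aset n a r G ?Z"
  have tt: "t = Suc (t - 1)" using assms(2) by simp
  have "?A - ?Z = {}"
  proof (rule ccontr)
    assume ne: "?A - ?Z \<noteq> {}"
    then have "rule t ?Z ?A \<notin> ?Z" using rule_ok by blast
    moreover have "Zset n a r rule G (Suc (t - 1)) = insert (rule (Suc (t - 1)) ?Z ?A) ?Z"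
      using ne by (simp add: Let_def)
    then have "Zset n a r rule G t = insert (rule t ?Z ?A) ?Z" using tt by metis
    ultimately show False using assms(1) by auto
  qed
  then have "Ahat n a r rule G (t - 1) = ?Z" using Z_sub_A[of G "t - 1"] unfolding Ahat_def by blast
  then have "Tstop n a r rule G \<le> t - 1" unfolding Tstop_def by (rule Least_le)
  then have "min t (Tstop n a r rule G) = Tstop n a r rule G"
    "min (t - 1) (Tstop n a r rule G) = Tstop n a r rule G" by auto
  then show ?thesis unfolding piv_min by simp
qed



lemma adj_strip: "adj (stripv v G) w u \<longleftrightarrow> adj G w u \<and> w \<noteq> v \<and> u \<noteq> v"
  unfolding adj_def stripv_def by (auto simp: min_def max_def)

lemma hasr_strip: "v \<notin> Z \<Longrightarrow> w \<noteq> v \<Longrightarrow> hasr r (stripv v G) Z w = hasr r G Z w"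
proof -
  assume "v \<notin> Z" "w \<noteq> v"
  then have "{x\<in>Z. adj (stripv v G) x w} = {x\<in>Z. adj G x w}" by (auto simp: adj_strip)
  then show ?thesis unfolding hasr_def by simp
qed

lemma hasr_strip_v: "1 \<le> r \<Longrightarrow> \<not> hasr r (stripv v G) Z v"
  unfolding hasr_def adj_strip by simp

lemma Aset_strip:
  assumes "v \<notin> Z" "a < v" "\<not> hasr r G Z v" "1 \<le> r"
  shows "Aset n a r (stripv v G) Z = Aset n a r G Z"
proof -
  have "hasr r (stripv v G) Z x = hasr r G Z x" for x
    using assms hasr_strip[OF assms(1)] hasr_strip_v[OF assms(4)]
    by (cases "x = v") auto
  then show ?thesis unfolding Aset_def by simp
qed

lemma least_min_eq:
  fixes P Q :: "nat \<Rightarrow> bool"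
  assumes ag: "\<And>x. x < s \<Longrightarrow> P x \<longleftrightarrow> Q x" and ep: "\<exists>x. P x" and eq: "\<exists>x. Q x"
  shows "min s (LEAST x. P x) = min s (LEAST x. Q x)"
proof -
  have key: "(LEAST x. P' x) = (LEAST x. Q' x)"
    if ag': "\<And>x. x < s \<Longrightarrow> P' x \<longleftrightarrow> Q' x" and ep': "\<exists>x. P' x" and lt: "(LEAST x. P' x) < s"
    for P' Q' :: "nat \<Rightarrow> bool"
  proof -
    have "P' (LEAST x. P' x)" using ep' by (rule LeastI_ex)
    then have q: "Q' (LEAST x. P' x)" using ag' lt by blast
    then have le: "(LEAST x. Q' x) \<le> (LEAST x. P' x)" by (rule Least_le)
    have "Q' (LEAST x. Q' x)" using q by (rule LeastI)
    then have "P' (LEAST x. Q' x)" using ag' le lt by simp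
    then have "(LEAST x. P' x) \<le> (LEAST x. Q' x)" by (rule Least_le)
    with le show ?thesis by simp
  qed
  show ?thesis
  proof (cases "(LEAST x. P x) < s")
    case True then show ?thesis using key[of P Q] ag ep by simp
  next
    case False
    show ?thesis
    proof (cases "(LEAST x. Q x) < s")
      case True
      then have "(LEAST x. Q x) = (LEAST x. P x)" using key[of Q P] ag eq by simp
      then show ?thesis using True False by simp
    next
      case False2: False
      then show ?thesis using False by simp
    qed
  qed
qed

lemma never_v:
  assumes "a < v" "1 \<le> r"
  shows "v \<notin> Zset n a r rule (stripv v G) s"
proof (induction s)
  case 0 then show ?case by simp
next
  case (Suc s)
  let ?G = "stripv v G"
  let ?Z = "Zset n a r rule ?G s"
  let ?A = "Aset n a r ?G ?Z"
  have nA: "v \<notin> ?A" using assms hasr_strip_v[OF assms(2)] unfolding Aset_def by auto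
  show ?case
  proof (cases "?A - ?Z = {}")
    case True then show ?thesis using Suc by (simp add: Let_def)
  next
    case False
    then have "rule (Suc s) ?Z ?A \<in> ?A" using rule_ok by blast
    then have "rule (Suc s) ?Z ?A \<noteq> v" using nA by metis
    then show ?thesis using Suc False by (simp add: Let_def)
  qed
qed

lemma agree:
  assumes "a < v" "1 \<le> r"
    and hyp: "\<And>s. s < t \<Longrightarrow> Zset n a r rule G s = Zset n a r rule (stripv v G) s \<Longrightarrow>
          \<not> hasr r G (Zset n a r rule G s) v"
  shows "s \<le> t \<Longrightarrow> Zset n a r rule G s = Zset n a r rule (stripv v G) s \<and> v \<notin> Zset n a r rule G s"
proof (induction s)
  case 0 then show ?case by simp
next
  case (Suc s)
  let ?G = "stripv v G"
  let ?Z = "Zset n a r rule G s"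
  let ?A = "Aset n a r G ?Z"
  have IH: "?Z = Zset n a r rule ?G s" "v \<notin> ?Z" using Suc by auto
  have nh: "\<not> hasr r G ?Z v" using hyp[of s] Suc IH by simp
  have AA: "Aset n a r ?G ?Z = ?A" by (rule Aset_strip[OF IH(2) assms(1) nh assms(2)])
  have eq: "Zset n a r rule G (Suc s) = Zset n a r rule ?G (Suc s)"
    unfolding Zset.simps Let_def IH(1)[symmetric] AA ..
  have nA: "v \<notin> ?A" using assms nh unfolding Aset_def by auto
  have "v \<notin> Zset n a r rule G (Suc s)"
  proof (cases "?A - ?Z = {}")
    case True then show ?thesis using IH by (simp add: Let_def)
  next
    case False
    then have "rule (Suc s) ?Z ?A \<in> ?A" using rule_ok by blast
    then have "rule (Suc s) ?Z ?A \<noteq> v" using nA by metis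
    then show ?thesis using IH False by (simp add: Let_def)
  qed
  with eq show ?case by simp
qed

lemma cond_iff:
  assumes "a < v" "1 \<le> r"
  shows "\<not> hasr r G (Zset n a r rule G t) v \<longleftrightarrow> \<not> hasr r G (Zset n a r rule (stripv v G) t) v"
proof
  assume C: "\<not> hasr r G (Zset n a r rule G t) v"
  have "Zset n a r rule G t = Zset n a r rule (stripv v G) t"
  proof (rule agree[OF assms, THEN conjunct1])
    fix s assume "s < t"
    then have "Zset n a r rule G s \<subseteq> Zset n a r rule G t" by (simp add: Zset_mono)
    then show "\<not> hasr r G (Zset n a r rule G s) v" using C hasr_mono Zset_finite by blast
  qed simp
  then show "\<not> hasr r G (Zset n a r rule (stripv v G) t) v" using C by simp
next
  assume C: "\<not> hasr r G (Zset n a r rule (stripv v G) t) v"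
  have "Zset n a r rule G t = Zset n a r rule (stripv v G) t"
  proof (rule agree[OF assms, THEN conjunct1])
    fix s assume "s < t" and e: "Zset n a r rule G s = Zset n a r rule (stripv v G) s"
    then have "Zset n a r rule (stripv v G) s \<subseteq> Zset n a r rule (stripv v G) t" by (simp add: Zset_mono)
    then show "\<not> hasr r G (Zset n a r rule G s) v" unfolding e using C hasr_mono Zset_finite by blast
  qed simp
  then show "\<not> hasr r G (Zset n a r rule G t) v" using C by simp
qed

lemma under_C:
  assumes "a < v" "1 \<le> r" "1 \<le> t"
    and C: "\<not> hasr r G (Zset n a r rule G (t - 1)) v"
  shows "\<And>s. s \<le> t \<Longrightarrow> Zset n a r rule G s = Zset n a r rule (stripv v G) s"
    and "\<And>s. s \<le> t \<Longrightarrow> v \<notin> Zset n a r rule G s"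
    and "\<And>s. s \<le> t \<Longrightarrow> piv n a r p rule G s = piv n a r p rule (stripv v G) s"
    and "\<And>s j. s \<le> t \<Longrightarrow> a + j \<noteq> v \<Longrightarrow> Xv n a r rule G s j = Xv n a r rule (stripv v G) s j"
    and "\<And>s. s < t \<Longrightarrow> Xv n a r rule G s (v - a) = 0"
    and "\<And>s. s < t \<Longrightarrow> Xv n a r rule (stripv v G) s (v - a) = 0"
proof -
  have nh: "\<not> hasr r G (Zset n a r rule G s) v" if "s < t" for s
  proof -
    have "Zset n a r rule G s \<subseteq> Zset n a r rule G (t - 1)" using that by (simp add: Zset_mono)
    then show ?thesis using C hasr_mono Zset_finite by blast
  qed
  have ag: "s \<le> t \<Longrightarrow> Zset n a r rule G s = Zset n a r rule (stripv v G) s \<and> v \<notin> Zset n a r rule G s" for s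
  proof (rule agree[OF assms(1,2), where t=t])
    fix sa assume "sa < t"
    then show "\<not> hasr r G (Zset n a r rule G sa) v" by (rule nh)
  qed
  show Z: "\<And>s. s \<le> t \<Longrightarrow> Zset n a r rule G s = Zset n a r rule (stripv v G) s"
    and nv: "\<And>s. s \<le> t \<Longrightarrow> v \<notin> Zset n a r rule G s" using ag by auto
  have QQ: "Ahat n a r rule G s = Zset n a r rule G s \<longleftrightarrow>
        Ahat n a r rule (stripv v G) s = Zset n a r rule (stripv v G) s" if "s < t" for s
  proof -
    have e: "Zset n a r rule G s = Zset n a r rule (stripv v G) s" using Z[of s] that by simp
    have "Aset n a r (stripv v G) (Zset n a r rule G s) = Aset n a r G (Zset n a r rule G s)"
      by (rule Aset_strip[OF _ assms(1) nh[OF that] assms(2)]) (use nv[of s] that in simp)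
    then have "Ahat n a r rule (stripv v G) s = Ahat n a r rule G s"
      unfolding Ahat_def e[symmetric] by simp
    then show ?thesis using e by simp
  qed
  show "\<And>s. s \<le> t \<Longrightarrow> piv n a r p rule G s = piv n a r p rule (stripv v G) s"
  proof -
    fix s assume "s \<le> t"
    then have "min s (Tstop n a r rule G) = min s (Tstop n a r rule (stripv v G))"
      unfolding Tstop_def using QQ stop_exists by (intro least_min_eq) auto
    then show "piv n a r p rule G s = piv n a r p rule (stripv v G) s" unfolding piv_min by simp
  qed
  show "\<And>s j. s \<le> t \<Longrightarrow> a + j \<noteq> v \<Longrightarrow> Xv n a r rule G s j = Xv n a r rule (stripv v G) s j"
  proof -
    fix s j assume "s \<le> t" "a + j \<noteq> v"
    then show "Xv n a r rule G s j = Xv n a r rule (stripv v G) s j"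
    proof -
      have "v \<notin> Zset n a r rule G s" using nv \<open>s \<le> t\<close> by blast
      then have "hasr r (stripv v G) (Zset n a r rule G s) (a + j) = hasr r G (Zset n a r rule G s) (a + j)"
        using hasr_strip \<open>a + j \<noteq> v\<close> by blast
      then show ?thesis unfolding Xv_def using Z[of s] \<open>s \<le> t\<close> by simp
    qed
  qed
  show "\<And>s. s < t \<Longrightarrow> Xv n a r rule G s (v - a) = 0"
    unfolding Xv_def using nh assms(1) by simp
  show "\<And>s. s < t \<Longrightarrow> Xv n a r rule (stripv v G) s (v - a) = 0"
    unfolding Xv_def using hasr_strip_v[OF assms(2)] assms(1) by simp
qed

context
  fixes p :: real
  assumes r1: "1 \<le> r" and p0: "0 \<le> p" and p1: "p < 1"
begin


lemma piv_lt1: "piv n a r p rule G s < 1"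
  using pihat_lt1[OF r1 p0 p1] by (simp add: piv_def)

lemma Phi_zero:
  assumes t1: "1 \<le> t" and v: "a < v" "v \<le> n"
    and f: "\<And>x. x \<notin> Eset n - Evset n v \<Longrightarrow> f x = False"
  defines "Zp \<equiv> Zset n a r rule f (t - 1)" and "Zc \<equiv> Zset n a r rule f t"
    and "pt \<equiv> piv n a r p rule f t" and "pp \<equiv> piv n a r p rule f (t - 1)"
  shows "measure_pmf.expectation (Pi_pmf (Evset n v) False (\<lambda>_. bernoulli_pmf p))
     (\<lambda>g. if card {z \<in> Zp. g (min z v, max z v)} < r
          then ((if r \<le> card {z \<in> Zc. g (min z v, max z v)} then 1 else (0::real)) - pt) / (1 - pt) + pp / (1 - pp)
          else 0) = 0"
proof -
  let ?P2 = "Pi_pmf (Evset n v) False (\<lambda>_. bernoulli_pmf p)"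
  have sf: "stripv v f = f"
  proof
    fix x :: "nat \<times> nat"
    show "stripv v f x = f x"
    proof (cases "fst x = v \<or> snd x = v")
      case True
      then have "x \<notin> Eset n - Evset n v" unfolding Evset_def by auto
      then show ?thesis using True f by (simp add: stripv_def)
    qed (simp add: stripv_def)
  qed
  have nvc: "v \<notin> Zc" unfolding Zc_def using never_v[OF v(1) r1, of f t] sf by simp
  have fin: "finite (set_pmf ?P2)" by (rule fin_Pi[OF finite_Evset])
  show ?thesis
  proof (cases "Zc = Zp")
    case True
    then have "Zset n a r rule f t = Zset n a r rule f (t - 1)" unfolding Zc_def Zp_def .
    then have "pt = pp" unfolding pt_def pp_def by (rule stay_case[OF _ t1])
    then have "\<And>g. (if card {z \<in> Zp. g (min z v, max z v)} < r
          then ((if r \<le> card {z \<in> Zc. g (min z v, max z v)} then 1 else (0::real)) - pt) / (1 - pt) + pp / (1 - pp)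
          else 0) = 0"
    proof -
      fix g :: "nat \<times> nat \<Rightarrow> bool"
      have e0: "(0 - pp) / (1 - pp) + pp / (1 - pp) = 0" by (simp add: diff_divide_distrib)
      show "(if card {z \<in> Zp. g (min z v, max z v)} < r
          then ((if r \<le> card {z \<in> Zc. g (min z v, max z v)} then 1 else (0::real)) - pt) / (1 - pt) + pp / (1 - pp)
          else 0) = 0"
      proof (cases "card {z \<in> Zp. g (min z v, max z v)} < r")
        case c: True
        then have "\<not> r \<le> card {z \<in> Zc. g (min z v, max z v)}" using True by simp
        then show ?thesis using c e0 \<open>pt = pp\<close> by simp
      qed simp
    qed
    then show ?thesis by simp
  next
    case False
    then have tT: "t \<le> Tstop n a r rule f" unfolding Zc_def Zp_def by (rule grow_case[OF _ t1])
    have ptv: "pt = pihat r p t" and ppv: "pp = pihat r p (t - 1)"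
    proof -
      have "min t (Tstop n a r rule f) = t" "min (t - 1) (Tstop n a r rule f) = t - 1" using tT by auto
      then show "pt = pihat r p t" "pp = pihat r p (t - 1)" unfolding pt_def pp_def piv_min by simp_all
    qed
    have cZc: "card Zc = t" and cZp: "card Zp = t - 1"
      unfolding Zc_def Zp_def using card_Zset[OF tT] card_Zset[of "t - 1" f] tT by auto
    have sub: "Zp \<subseteq> Zc" unfolding Zp_def Zc_def by (rule Zset_mono) simp
    have Zcs: "Zc \<subseteq> {1..n}" unfolding Zc_def by (rule Zset_sub)
    have nvp: "v \<notin> Zp" using sub nvc by blast
    have v1: "1 \<le> v" using v by simp
    have finc: "finite Zc" unfolding Zc_def by (rule Zset_finite)
    define I1 where "I1 = (\<lambda>g. if r \<le> card {z \<in> Zp. g (min z v, max z v)} then 1 else (0::real))"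
    define I2 where "I2 = (\<lambda>g. if r \<le> card {z \<in> Zc. g (min z v, max z v)} then 1 else (0::real))"
    have ne1: "1 - pt \<noteq> 0" "1 - pp \<noteq> 0" using piv_lt1 unfolding pt_def pp_def by (simp_all add: less_imp_neq)
    define A0 where "A0 = - pt / (1 - pt) + pp / (1 - pp)"
    define B1 where "B1 = - 1 - pp / (1 - pp)"
    define B2 where "B2 = 1 / (1 - pt)"
    have pw: "(if card {z \<in> Zp. g (min z v, max z v)} < r
          then ((if r \<le> card {z \<in> Zc. g (min z v, max z v)} then 1 else 0) - pt) / (1 - pt) + pp / (1 - pp)
          else 0) = A0 + B1 * I1 g + B2 * I2 g" for g
    proof -
      have le: "card {z \<in> Zp. g (min z v, max z v)} \<le> card {z \<in> Zc. g (min z v, max z v)}"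
        using sub finc by (intro card_mono) auto
      show ?thesis
      proof (cases "card {z \<in> Zp. g (min z v, max z v)} < r")
        case True
        then show ?thesis unfolding A0_def B1_def B2_def I1_def I2_def
          using alg2[OF ne1] by simp
      next
        case False
        then show ?thesis unfolding A0_def B1_def B2_def I1_def I2_def
          using alg3[OF ne1] le by simp
      qed
    qed
    have Zps: "Zp \<subseteq> {1..n}" using sub Zcs by blast
    have p1': "p \<le> 1" using p1 by simp
    have e1: "measure_pmf.expectation ?P2 I1 = pp"
      unfolding I1_def ppv using expect_ind[OF Zps nvp v1 v(2) p0 p1', of r] cZp by simp
    have e2: "measure_pmf.expectation ?P2 I2 = pt"
      unfolding I2_def ptv using expect_ind[OF Zcs nvc v1 v(2) p0 p1', of r] cZc by simp
    have int: "integrable ?P2 h" for h :: "_ \<Rightarrow> real" by (rule integrable_measure_pmf_finite[OF fin])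
    have "measure_pmf.expectation ?P2 (\<lambda>g. A0 + B1 * I1 g + B2 * I2 g) =
        measure_pmf.expectation ?P2 (\<lambda>g. A0 + B1 * I1 g) + measure_pmf.expectation ?P2 (\<lambda>g. B2 * I2 g)"
      by (rule Bochner_Integration.integral_add[OF int int])
    also have "measure_pmf.expectation ?P2 (\<lambda>g. A0 + B1 * I1 g) =
        measure_pmf.expectation ?P2 (\<lambda>g. A0) + measure_pmf.expectation ?P2 (\<lambda>g. B1 * I1 g)"
      by (rule Bochner_Integration.integral_add[OF int int])
    also have "measure_pmf.expectation ?P2 (\<lambda>g. A0) = A0" by simp
    also have "measure_pmf.expectation ?P2 (\<lambda>g. B1 * I1 g) = B1 * pp"
      using e1 by (simp only: integral_mult_right_zero)
    also have "measure_pmf.expectation ?P2 (\<lambda>g. B2 * I2 g) = B2 * pt"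
      using e2 by (simp only: integral_mult_right_zero)
    also have "A0 + B1 * pp + B2 * pt = 0" unfolding A0_def B1_def B2_def by (rule alg1[OF ne1])
    finally show ?thesis by (simp only: pw)
  qed
qed



lemma core:
  assumes t1: "1 \<le> t" and v: "a < v" "v \<le> n"
    and hinv: "\<And>G. \<not> hasr r G (Zset n a r rule G (t - 1)) v \<Longrightarrow> h G = h (stripv v G)"
  shows "measure_pmf.expectation (Gnp n p) (\<lambda>G. h G *
     ((Xv n a r rule G t (v - a) - piv n a r p rule G t) / (1 - piv n a r p rule G t) -
      (Xv n a r rule G (t - 1) (v - a) - piv n a r p rule G (t - 1)) / (1 - piv n a r p rule G (t - 1)))) = 0"
proof -
  let ?R = "Eset n - Evset n v"
  let ?P1 = "Pi_pmf ?R False (\<lambda>_. bernoulli_pmf p)"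
  let ?P2 = "Pi_pmf (Evset n v) False (\<lambda>_. bernoulli_pmf p)"
  define D where "D = (\<lambda>G. (Xv n a r rule G t (v - a) - piv n a r p rule G t) / (1 - piv n a r p rule G t) -
      (Xv n a r rule G (t - 1) (v - a) - piv n a r p rule G (t - 1)) / (1 - piv n a r p rule G (t - 1)))"
  define mrg where "mrg = (\<lambda>(f, g) x. if x \<in> ?R then f x else (g x :: bool))"
  have finR: "finite ?R" using finite_Eset by simp
  have "measure_pmf.expectation (Gnp n p) (\<lambda>G. h G * D G) =
      measure_pmf.expectation (pair_pmf ?P1 ?P2) (\<lambda>x. h (mrg x) * D (mrg x))"
    unfolding Gnp_split[where v=v] mrg_def by simp
  also have "\<dots> = 0"
  proof (rule pair_int_zero[OF fin_Pi[OF finR] fin_Pi[OF finite_Evset]])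
    fix f assume "f \<in> set_pmf ?P1"
    then have f: "\<And>x. x \<notin> ?R \<Longrightarrow> f x = False" using set_Pi_pmf_subset[OF finR, of False "\<lambda>_. bernoulli_pmf p"] by blast
    define Zp where "Zp = Zset n a r rule f (t - 1)"
    define Zc where "Zc = Zset n a r rule f t"
    define pt where "pt = piv n a r p rule f t"
    define pp where "pp = piv n a r p rule f (t - 1)"
    define Phi where "Phi = (\<lambda>g. if card {z \<in> Zp. g (min z v, max z v)} < r
          then ((if r \<le> card {z \<in> Zc. g (min z v, max z v)} then 1 else (0::real)) - pt) / (1 - pt) + pp / (1 - pp)
          else 0)"
    have PZ: "measure_pmf.expectation ?P2 Phi = 0"
      unfolding Phi_def Zp_def Zc_def pt_def pp_def by (rule Phi_zero[OF t1 v f])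
    have pw: "h (mrg (f, g)) * D (mrg (f, g)) = h f * Phi g" if g0: "g \<in> set_pmf ?P2" for g
    proof -
      have g: "\<And>x. x \<notin> Evset n v \<Longrightarrow> g x = False" using set_Pi_pmf_subset[OF finite_Evset, of n v False "\<lambda>_. bernoulli_pmf p"] g0 by blast
      define G where "G = mrg (f, g)"
      have Gx: "G x = (if x \<in> ?R then f x else g x)" for x unfolding G_def mrg_def by simp
      have sG: "stripv v G = f"
      proof
        fix x :: "nat \<times> nat"
        show "stripv v G x = f x"
        proof (cases "fst x = v \<or> snd x = v")
          case True
          then have "x \<notin> ?R" unfolding Evset_def by auto
          then show ?thesis using True f by (simp add: stripv_def)
        next
          case False
          then have "x \<notin> Evset n v" unfolding Evset_def by auto
          then show ?thesis using False f g Gx[of x] by (simp add: stripv_def)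
        qed
      qed
      have adjG: "adj G z v = g (min z v, max z v)" if "z \<noteq> v" for z
      proof -
        have "(min z v, max z v) \<notin> ?R" unfolding Evset_def by (auto simp: min_def max_def)
        then have "G (min z v, max z v) = g (min z v, max z v)" using Gx by presburger
        then show ?thesis using that unfolding adj_def by simp
      qed
      have cnt: "{w \<in> S. adj G w v} = {z \<in> S. g (min z v, max z v)}" if "v \<notin> S" for S
      proof (rule Collect_cong)
        fix w show "(w \<in> S \<and> adj G w v) = (w \<in> S \<and> g (min w v, max w v))"
          using that adjG[of w] by (cases "w = v") auto
      qed
      have nvc: "v \<notin> Zc" unfolding Zc_def using never_v[OF v(1) r1, of G t] sG by simp
      have nvp: "v \<notin> Zp" unfolding Zp_def using never_v[OF v(1) r1, of G "t - 1"] sG by simp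
      have av: "a + (v - a) = v" using v by simp
      have ci: "\<not> hasr r G (Zset n a r rule G (t - 1)) v \<longleftrightarrow> card {z \<in> Zp. g (min z v, max z v)} < r"
        using cond_iff[OF v(1) r1, of G "t - 1"] sG cnt[OF nvp] unfolding Zp_def hasr_def by auto
      show ?thesis
      proof (cases "\<not> hasr r G (Zset n a r rule G (t - 1)) v")
        case C: True
        note U = under_C[OF v(1) r1 t1 C]
        have c1: "card {z \<in> Zp. g (min z v, max z v)} < r" using ci C by simp
        have hG: "h G = h f" using hinv[OF C] sG by simp
        have ZGt: "Zset n a r rule G t = Zc" using U(1)[of t] sG unfolding Zc_def by simp
        have pG1: "piv n a r p rule G t = pt" using U(3)[of t] sG unfolding pt_def by simp
        have pG2: "piv n a r p rule G (t - 1) = pp" using U(3)[of "t - 1"] sG unfolding pp_def by simp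
        have X0: "Xv n a r rule G (t - 1) (v - a) = 0" using U(5)[of "t - 1"] t1 by simp
        have Xt: "Xv n a r rule G t (v - a) = (if r \<le> card {z \<in> Zc. g (min z v, max z v)} then 1 else 0)"
          unfolding Xv_def av ZGt hasr_def cnt[OF nvc] by simp
        have dG: "D G = ((if r \<le> card {z \<in> Zc. g (min z v, max z v)} then 1 else 0) - pt) / (1 - pt) - (0 - pp) / (1 - pp)"
          unfolding D_def X0 Xt pG1 pG2 by (rule refl)
        have phG: "Phi g = ((if r \<le> card {z \<in> Zc. g (min z v, max z v)} then 1 else 0) - pt) / (1 - pt) + pp / (1 - pp)"
          unfolding Phi_def by (simp only: c1 if_True)
        have e: "- ((0 - pp) / (1 - pp)) = pp / (1 - pp)" by simp
        have "D G = Phi g" using dG phG e by linarith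
        then show ?thesis unfolding G_def[symmetric] using hG by simp
      next
        case nC: False
        then have h1: "hasr r G (Zset n a r rule G (t - 1)) v" by simp
        have h2: "hasr r G (Zset n a r rule G t) v"
          by (rule hasr_mono[OF Zset_mono Zset_finite h1]) simp
        have c1: "\<not> card {z \<in> Zp. g (min z v, max z v)} < r" using ci nC by simp
        have X1: "Xv n a r rule G (t - 1) (v - a) = 1" "Xv n a r rule G t (v - a) = 1"
          unfolding Xv_def av using h1 h2 by simp_all
        have ne: "1 - piv n a r p rule G t \<noteq> 0" "1 - piv n a r p rule G (t - 1) \<noteq> 0"
          using piv_lt1 by (simp_all add: less_imp_neq)
        have "D G = 0" unfolding D_def X1 using ne by simp
        then show ?thesis unfolding G_def[symmetric] Phi_def using c1 by simp
      qed
    qed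
    have "measure_pmf.expectation ?P2 (\<lambda>g. h (mrg (f, g)) * D (mrg (f, g))) =
        measure_pmf.expectation ?P2 (\<lambda>g. h f * Phi g)"
      by (rule pmf_int_cong) (rule pw)
    also have "\<dots> = h f * measure_pmf.expectation ?P2 Phi" by (rule integral_mult_right_zero)
    also have "\<dots> = 0" using PZ by simp
    finally show "measure_pmf.expectation ?P2 (\<lambda>g. h (mrg (f, g)) * D (mrg (f, g))) = 0" .
  qed
  finally show ?thesis unfolding D_def .
qed


lemma Mv_cong:
  assumes "\<And>j. 1 \<le> j \<Longrightarrow> j \<le> l \<Longrightarrow> Xv n a r rule G s j = Xv n a r rule G' s j"
    and "\<And>j. Xv n a r rule G (s - 1) j = Xv n a r rule G' (s - 1) j"
    and "piv n a r p rule G s = piv n a r p rule G' s"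
    and "piv n a r p rule G (s - 1) = piv n a r p rule G' (s - 1)"
  shows "Mv n a r p rule G s l = Mv n a r p rule G' s l"
  unfolding Mv_def using assms by (intro arg_cong2[where f="(+)"] sum.cong) auto

lemma idx:
  fixes N j k :: nat
  assumes "1 \<le> N" "1 \<le> j" "j \<le> k"
  shows "(j - 1) div N \<le> k div N" and "(j - 1) div N = k div N \<Longrightarrow> (j - 1) mod N < k mod N"
proof -
  show "(j - 1) div N \<le> k div N" by (rule div_le_mono) (use assms in simp)
  assume eq: "(j - 1) div N = k div N"
  have "j - 1 = (j - 1) div N * N + (j - 1) mod N" by simp
  moreover have "k = k div N * N + k mod N" by simp
  moreover have "j - 1 < k" using assms by simp
  moreover have "(j - 1) div N * N = k div N * N" using eq by simp
  ultimately show "(j - 1) mod N < k mod N" by linarith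
qed

lemma Yagree:
  assumes N: "1 \<le> n - a" and k: "k < n * (n - a)"
    and C: "\<not> hasr r G (Zset n a r rule G (k div (n - a))) (a + (k mod (n - a) + 1))"
    and j: "j \<le> k"
  shows "Mseq n a r p rule j G = Mseq n a r p rule j (stripv (a + (k mod (n - a) + 1)) G)"
proof -
  define NN where "NN = n - a"
  define t where "t = k div NN + 1"
  define i where "i = k mod NN + 1"
  define v where "v = a + i"
  define G' where "G' = stripv v G"
  have NN1: "1 \<le> NN" using N unfolding NN_def .
  have t1: "1 \<le> t" unfolding t_def by simp
  have iN: "i \<le> NN" unfolding i_def using NN1 by (simp add: Suc_le_eq)
  have av: "a < v" unfolding v_def i_def by simp
  have C': "\<not> hasr r G (Zset n a r rule G (t - 1)) v"
    using C unfolding t_def v_def i_def NN_def by simp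
  note U = under_C[OF av r1 t1 C']
  have vai: "v - a = i" unfolding v_def by simp
  have XA: "Xv n a r rule G s j' = Xv n a r rule G' s j'" if "s \<le> t - 1" for s j'
  proof (cases "a + j' = v")
    case True
    then have "j' = v - a" by simp
    then show ?thesis using U(5)[of s] U(6)[of s] that t1 unfolding G'_def by simp
  next
    case False
    then show ?thesis using U(4)[of s j'] that unfolding G'_def by simp
  qed
  have XB: "Xv n a r rule G t j' = Xv n a r rule G' t j'" if "j' \<noteq> i" for j'
    using U(4)[of t j'] that unfolding G'_def v_def by simp
  have PA: "piv n a r p rule G s = piv n a r p rule G' s" if "s \<le> t" for s
    using U(3)[OF that] unfolding G'_def .
  show ?thesis
  proof (cases "j = 0")
    case True
    show ?thesis unfolding True Mseq_def G'_def[symmetric] v_def[symmetric] i_def[symmetric] NN_def[symmetric]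
      by (simp add: NN_def[symmetric]) (rule Mv_cong; (rule XA | rule PA); simp)
  next
    case False
    define s where "s = (j - 1) div NN + 1"
    define l where "l = (j - 1) mod NN + 1"
    have j1: "1 \<le> j" using False by simp
    have st: "s \<le> t" unfolding s_def t_def using idx(1)[OF NN1 j1 j] by simp
    have Mj: "Mseq n a r p rule j H = Mv n a r p rule H s l" for H
      unfolding Mseq_def s_def l_def NN_def using False by simp
    have "Mv n a r p rule G s l = Mv n a r p rule G' s l"
    proof (rule Mv_cong)
      fix j' assume "1 \<le> j'" "j' \<le> l"
      show "Xv n a r rule G s j' = Xv n a r rule G' s j'"
      proof (cases "s \<le> t - 1")
        case True then show ?thesis by (rule XA)
      next
        case False
        then have "s = t" using st by simp
        then have "(j - 1) div NN = k div NN" unfolding s_def t_def by simp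
        then have "(j - 1) mod NN < k mod NN" by (rule idx(2)[OF NN1 j1 j])
        then have "j' \<noteq> i" using \<open>j' \<le> l\<close> unfolding l_def i_def by simp
        then show ?thesis using XB \<open>s = t\<close> by simp
      qed
    next
      fix j' show "Xv n a r rule G (s - 1) j' = Xv n a r rule G' (s - 1) j'"
        using st by (intro XA) simp
    next
      show "piv n a r p rule G s = piv n a r p rule G' s" using st by (rule PA)
    next
      show "piv n a r p rule G (s - 1) = piv n a r p rule G' (s - 1)" using st by (intro PA) simp
    qed
    then show ?thesis unfolding Mj G'_def v_def i_def NN_def .
  qed
qed


lemma divmod_eq: "m < N \<Longrightarrow> (q * N + m) div N = q \<and> (q * N + m) mod N = (m::nat)"
  by simp

lemma Mseq_diff:
  assumes N: "1 \<le> n - a"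
  shows "Mseq n a r p rule (Suc k) G - Mseq n a r p rule k G =
    (Xv n a r rule G (k div (n - a) + 1) (k mod (n - a) + 1) - piv n a r p rule G (k div (n - a) + 1)) /
      (1 - piv n a r p rule G (k div (n - a) + 1)) -
    (Xv n a r rule G (k div (n - a)) (k mod (n - a) + 1) - piv n a r p rule G (k div (n - a))) /
      (1 - piv n a r p rule G (k div (n - a)))"
proof -
  define NN where "NN = n - a"
  define T where "T = (\<lambda>s j. (Xv n a r rule G s j - piv n a r p rule G s) / (1 - piv n a r p rule G s))"
  define q where "q = k div NN"
  define m where "m = k mod NN"
  have NN1: "1 \<le> NN" using N unfolding NN_def .
  have mN: "m < NN" unfolding m_def using NN1 by simp
  have kqm: "k = q * NN + m" unfolding q_def m_def by simp
  have MvT: "Mv n a r p rule G s l = (\<Sum>j=1..l. T s j) + (\<Sum>j=l+1..NN. T (s - 1) j)" for s l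
    unfolding Mv_def T_def NN_def ..
  have h1: "Mseq n a r p rule (Suc k) G = (\<Sum>j=1..m+1. T (q+1) j) + (\<Sum>j=m+2..NN. T q j)"
    unfolding Mseq_def MvT by (simp add: q_def m_def NN_def)
  have h0: "Mseq n a r p rule k G = (\<Sum>j=1..m. T (q+1) j) + (\<Sum>j=m+1..NN. T q j)"
  proof (cases "m = 0")
    case False
    then have k1: "k \<noteq> 0" using kqm by auto
    have km: "k - 1 = q * NN + (m - 1)" using kqm False by simp
    have d: "(k - 1) div NN = q" and md: "(k - 1) mod NN = m - 1"
      unfolding km using mN by simp_all
    show ?thesis unfolding Mseq_def MvT using k1 d md False by (simp add: NN_def)
  next
    case True
    show ?thesis
    proof (cases "k = 0")
      case True
      then have "q = 0" unfolding q_def by simp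
      then show ?thesis unfolding Mseq_def MvT using True \<open>m = 0\<close> by (simp add: NN_def)
    next
      case False
      then have q1: "1 \<le> q" using kqm \<open>m = 0\<close> by (cases q) auto
      have km: "k - 1 = (q - 1) * NN + (NN - 1)" using kqm \<open>m = 0\<close> q1 NN1
        by (cases q) (auto simp: algebra_simps)
      have d: "(k - 1) div NN = q - 1" and md: "(k - 1) mod NN = NN - 1"
        unfolding km using divmod_eq[of "NN - 1" NN "q - 1"] NN1 by simp_all
      have "Mseq n a r p rule k G = Mv n a r p rule G q NN"
        unfolding Mseq_def using False d md q1 NN1 by (simp add: NN_def Suc_diff_Suc)
      also have "\<dots> = (\<Sum>j=1..NN. T q j)" unfolding MvT by simp
      finally show ?thesis using \<open>m = 0\<close> by simp
    qed
  qed
  have s1: "(\<Sum>j=1..m+1. T (q+1) j) = (\<Sum>j=1..m. T (q+1) j) + T (q+1) (m+1)"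
    by simp
  have s2: "(\<Sum>j=m+1..NN. T q j) = T q (m+1) + (\<Sum>j=m+2..NN. T q j)"
    using mN by (subst sum.atLeast_Suc_atMost) simp_all
  have "Mseq n a r p rule (Suc k) G - Mseq n a r p rule k G = T (q+1) (m+1) - T q (m+1)"
    unfolding h1 h0 s1 s2 by simp
  then show ?thesis unfolding T_def q_def m_def NN_def .
qed

lemma step_key:
  assumes k: "k < n * (n - a)"
    and sat: "\<And>x y. x \<in> A \<Longrightarrow> (\<forall>j\<le>k. Mseq n a r p rule j x = Mseq n a r p rule j y) \<Longrightarrow> y \<in> A"
  shows "measure_pmf.expectation (Gnp n p)
     (\<lambda>G. indicator A G * (Mseq n a r p rule (Suc k) G - Mseq n a r p rule k G)) = 0"
proof -
  have N: "1 \<le> n - a" using k by (cases "n - a") auto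
  define t where "t = k div (n - a) + 1"
  define v where "v = a + (k mod (n - a) + 1)"
  have t1: "1 \<le> t" unfolding t_def by simp
  have av: "a < v" unfolding v_def by simp
  have vn: "v \<le> n" unfolding v_def using N a_le
    by (metis Suc_eq_plus1 Suc_le_eq add_le_cancel_left le_add_diff_inverse mod_less_divisor less_le_trans
        not_less_eq_eq order_refl zero_less_one)
  have vai: "v - a = k mod (n - a) + 1" unfolding v_def by simp
  have hinv: "indicator A G = indicator A (stripv v G)"
    if C: "\<not> hasr r G (Zset n a r rule G (t - 1)) v" for G :: "nat \<times> nat \<Rightarrow> bool"
  proof -
    have C': "\<not> hasr r G (Zset n a r rule G (k div (n - a))) (a + (k mod (n - a) + 1))"
      using C unfolding t_def v_def by simp
    have eq: "\<forall>j\<le>k. Mseq n a r p rule j G = Mseq n a r p rule j (stripv v G)"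
      using Yagree[OF N k C'] unfolding v_def by blast
    have "G \<in> A \<longleftrightarrow> stripv v G \<in> A" using sat eq by (metis (no_types, lifting))
    then show ?thesis unfolding indicator_def by simp
  qed
  have "measure_pmf.expectation (Gnp n p)
     (\<lambda>G. indicator A G * (Mseq n a r p rule (Suc k) G - Mseq n a r p rule k G)) =
    measure_pmf.expectation (Gnp n p) (\<lambda>G. indicator A G *
     ((Xv n a r rule G t (v - a) - piv n a r p rule G t) / (1 - piv n a r p rule G t) -
      (Xv n a r rule G (t - 1) (v - a) - piv n a r p rule G (t - 1)) / (1 - piv n a r p rule G (t - 1))))"
    unfolding Mseq_diff[OF N] vai t_def by simp
  also have "\<dots> = 0" by (rule core[where h="indicator A", OF t1 av vn hinv])
  finally show ?thesis .
qed


lemma main: "martingale_upto (measure_pmf (Gnp n p)) (Mseq n a r p rule) (n * (n - a))"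
proof -
  have finG: "finite (set_pmf (Gnp n p))"
    unfolding Gnp_def using fin_Pi[OF finite_Eset[unfolded Eset_def]] .
  show ?thesis unfolding martingale_upto_def
  proof (intro conjI allI impI)
    fix k show "integrable (measure_pmf (Gnp n p)) (Mseq n a r p rule k)"
      by (rule integrable_measure_pmf_finite[OF finG])
  next
    fix k assume k: "k < n * (n - a)"
    show "AE \<omega> in measure_pmf (Gnp n p). real_cond_exp (measure_pmf (Gnp n p))
        (nat_filtration (measure_pmf (Gnp n p)) (Mseq n a r p rule) k) (Mseq n a r p rule (Suc k)) \<omega> =
        Mseq n a r p rule k \<omega>"
      by (rule cond_exp_step[OF finG]) (rule step_key[OF k])
  qed
qed

end
end

theorem lemma1:
  fixes n a r :: nat and p :: real
    and rule :: "nat \<Rightarrow> nat set \<Rightarrow> nat set \<Rightarrow> nat"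
  assumes "2 \<le> r" and "0 < p" and "p < 1" and "a \<le> n"
    and "\<And>t Z A. A - Z \<noteq> {} \<Longrightarrow> rule t Z A \<in> A - Z"
  shows "martingale_upto (measure_pmf (Gnp n p)) (Mseq n a r p rule) (n * (n - a))"
  apply (rule main)
  using assms by auto

end
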